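(* Let $k$ be a field of characteristic $p>0$ and $A$ an infinite-dimensional $k$-vector space. For every $r\ge0$, $S_{\le r}A\neq\bigoplus_{0\le i\le r}S^iA$.
   Context: $SA=\bigoplus_{m\ge0}S^mA$ is the symmetric algebra of $A$ ($S^0A=k$, $S^mA$ the $m$-th symmetric power, with pure symmetric tensors $a_1\otimes_s\dots\otimes_s a_m$). The linear map $\partial\colon SA\to SA\otimes A$ is given by $\partial(\lambda)=0$ for $\lambda\in S^0A$ and $\partial(a_1\otimes_s\dots\otimes_s a_m)=\sum_{i=1}^m(a_1\otimes_s\dots\otimes_s a_{i-1}\otimes_s a_{i+1}\otimes_s\dots\otimes_s a_m)\otimes a_i$. Iterates: $\partial^0=1_{SA}$ and $\partial^{r+1}:=\partial;(\partial^r\otimes 1_A)\colon SA\to SA\otimes A^{\otimes(r+1)}$. Define $S_{\le r}A:=\ker(\partial^{r+1})\subseteq SA$. *)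

theory Defs
  imports Main "HOL-Library.Poly_Mapping"
begin

(* Coordinate model: A = span of a basis indexed by the type 'b, i.e. A = ('b \<Rightarrow>\<^sub>0 'k).
   Monomials ('b \<Rightarrow>\<^sub>0 nat) form a basis of SA, so SA = (('b \<Rightarrow>\<^sub>0 nat) \<Rightarrow>\<^sub>0 'k).
   SA \<otimes> A^{\<otimes> n} has basis (monomial, list of n basis indices), so we use
   ((('b \<Rightarrow>\<^sub>0 nat) \<times> 'b list) \<Rightarrow>\<^sub>0 'k). *)

type_synonym ('b, 'k) symalg = "('b \<Rightarrow>\<^sub>0 nat) \<Rightarrow>\<^sub>0 'k"
type_synonym ('b, 'k) symtens = "(('b \<Rightarrow>\<^sub>0 nat) \<times> 'b list) \<Rightarrow>\<^sub>0 'k"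

definition mdeg :: "('b \<Rightarrow>\<^sub>0 nat) \<Rightarrow> nat" where
  "mdeg M = (\<Sum>b\<in>Poly_Mapping.keys M. Poly_Mapping.lookup M b)"

definition Spow :: "nat \<Rightarrow> ('b, 'k::zero) symalg set" where
  "Spow m = {f. \<forall>M\<in>Poly_Mapping.keys f. mdeg M = m}"

definition Sdsum :: "nat \<Rightarrow> ('b, 'k::comm_monoid_add) symalg set" where
  "Sdsum r = {(\<Sum>i\<le>r. g i) | g. \<forall>i\<le>r. g i \<in> Spow i}"

definition tens_right :: "'b \<Rightarrow> ('b, 'k::comm_monoid_add) symtens \<Rightarrow> ('b, 'k) symtens" where
  "tens_right b g = (\<Sum>p\<in>Poly_Mapping.keys g. Poly_Mapping.single (fst p, snd p @ [b]) (Poly_Mapping.lookup g p))"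

definition scal :: "'k::semiring_0 \<Rightarrow> ('a \<Rightarrow>\<^sub>0 'k) \<Rightarrow> ('a \<Rightarrow>\<^sub>0 'k)" where
  "scal c g = Poly_Mapping.map (\<lambda>x. c * x) g"

(* \<partial>^n on a monomial x^M; \<partial>^{n+1} = \<partial>;(\<partial>^n \<otimes> 1), and
   \<partial>(x^M) = \<Sum>_b M(b) x^{M - e_b} \<otimes> b  (the paper's formula, grouping equal factors) *)
fun dmono :: "nat \<Rightarrow> ('b \<Rightarrow>\<^sub>0 nat) \<Rightarrow> ('b, 'k::comm_semiring_1) symtens" where
  "dmono 0 M = Poly_Mapping.single (M, []) 1"
| "dmono (Suc n) M =
     (\<Sum>b\<in>Poly_Mapping.keys M. scal (of_nat (Poly_Mapping.lookup M b)) (tens_right b (dmono n (M - Poly_Mapping.single b 1))))"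

definition dpow :: "nat \<Rightarrow> ('b, 'k::comm_semiring_1) symalg \<Rightarrow> ('b, 'k) symtens" where
  "dpow n f = (\<Sum>M\<in>Poly_Mapping.keys f. scal (Poly_Mapping.lookup f M) (dmono n M))"

definition S_le :: "nat \<Rightarrow> ('b, 'k::comm_semiring_1) symalg set" where
  "S_le r = {f. dpow (Suc r) f = 0}"

end

theory Submission
  imports Defs
begin

lemma scal_zero_left: "scal (0::'k::semiring_0) g = 0"
  unfolding scal_def by (transfer) auto

lemma scal_zero: "scal c 0 = 0"
  unfolding scal_def by (transfer) auto

theorem proposition7p9:
  fixes r :: nat
  assumes "CHAR('k::field) > 0"
    and "infinite (UNIV :: 'b set)"
  shows "(S_le r :: ('b, 'k) symalg set) \<noteq> Sdsum r"
proof
  assume eq: "(S_le r :: ('b, 'k) symalg set) = Sdsum r"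
  define p where "p = CHAR('k)"
  define b :: 'b where "b = undefined"
  define M :: "'b \<Rightarrow>\<^sub>0 nat" where "M = Poly_Mapping.single b (p * Suc r)"
  have p0: "p * Suc r \<noteq> 0" using assms(1) p_def by simp
  have keysM: "Poly_Mapping.keys M = {b}" using p0 by (simp add: M_def)
  have lkM: "Poly_Mapping.lookup M b = p * Suc r" unfolding M_def by (simp only: lookup_single_eq)
  have ofn: "(of_nat (p * Suc r) :: 'k) = 0" unfolding p_def by (simp add: of_nat_CHAR)
  have mdM: "mdeg M = p * Suc r" unfolding mdeg_def keysM using lkM by simp
  have dm: "(dmono (Suc r) M :: ('b,'k) symtens) = 0"
  proof -
    have "(dmono (Suc r) M :: ('b,'k) symtens) = scal (of_nat (p * Suc r)) (tens_right b (dmono r (M - Poly_Mapping.single b 1)))"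
      by (simp add: keysM lkM)
    also have "\<dots> = 0" unfolding ofn by (rule scal_zero_left)
    finally show ?thesis .
  qed
  define f :: "('b,'k) symalg" where "f = Poly_Mapping.single M 1"
  have "dpow (Suc r) f = 0"
    unfolding dpow_def f_def by (simp add: dm scal_zero del: dmono.simps)
  hence "f \<in> S_le r" by (simp add: S_le_def)
  hence "f \<in> Sdsum r" using eq by simp
  then obtain g where fg: "f = (\<Sum>i\<le>r. g i)" and gi: "\<forall>i\<le>r. g i \<in> Spow i"
    unfolding Sdsum_def by blast
  have "Poly_Mapping.lookup f M = (\<Sum>i\<le>r. Poly_Mapping.lookup (g i) M)"
    unfolding fg by (simp add: lookup_sum)
  also have "\<dots> = 0"
  proof (rule sum.neutral, intro ballI)
    fix i assume i: "i \<in> {..r}"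
    show "Poly_Mapping.lookup (g i) M = 0"
    proof (rule ccontr)
      assume "Poly_Mapping.lookup (g i) M \<noteq> 0"
      hence "M \<in> Poly_Mapping.keys (g i)" by (simp add: in_keys_iff)
      with gi i have "mdeg M = i" by (auto simp: Spow_def)
      with mdM i p0 show False by (cases p) auto
    qed
  qed
  finally show False by (simp add: f_def)
qed

end
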